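(* Let $G$ be a connected graph of order at least three. If $\gamma(G-v)\ge \gamma(G)$ for every vertex $v$ that belongs to some $\gamma$-set of $G$, then $\gamma(G)=\gamma_{\rm cer}(G)$.
   Context: All graphs are finite and simple; $G-v$ denotes the graph obtained by deleting vertex $v$. A set $D\subseteq V_G$ is a dominating set of $G$ if every vertex of $V_G-D$ has a neighbor in $D$; $\gamma(G)$ is the minimum cardinality of a dominating set, and a $\gamma$-set is a dominating set of cardinality $\gamma(G)$. A set $D\subseteq V_G$ is a certified dominating set of $G$ if $D$ is a dominating set of $G$ and every vertex of $D$ has either zero or at least two neighbors in $V_G-D$; $\gamma_{\rm cer}(G)$ is the minimum cardinality of a certified dominating set of $G$. *)

theory Defs
  imports Main
begin

definition simple_graph :: "'a set \<Rightarrow> ('a \<Rightarrow> 'a \<Rightarrow> bool) \<Rightarrow> bool" where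
  "simple_graph V E \<longleftrightarrow> finite V \<and> (\<forall>u v. E u v \<longrightarrow> u \<in> V \<and> v \<in> V)
     \<and> (\<forall>u v. E u v \<longrightarrow> E v u) \<and> (\<forall>v. \<not> E v v)"

inductive reachable :: "'a set \<Rightarrow> ('a \<Rightarrow> 'a \<Rightarrow> bool) \<Rightarrow> 'a \<Rightarrow> 'a \<Rightarrow> bool"
  for V E where
  refl: "v \<in> V \<Longrightarrow> reachable V E v v"
| step: "reachable V E u v \<Longrightarrow> E v w \<Longrightarrow> w \<in> V \<Longrightarrow> reachable V E u w"

definition connected_graph :: "'a set \<Rightarrow> ('a \<Rightarrow> 'a \<Rightarrow> bool) \<Rightarrow> bool" where
  "connected_graph V E \<longleftrightarrow> V \<noteq> {} \<and> (\<forall>u\<in>V. \<forall>v\<in>V. reachable V E u v)"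

definition del_vertex_edges :: "('a \<Rightarrow> 'a \<Rightarrow> bool) \<Rightarrow> 'a \<Rightarrow> 'a \<Rightarrow> 'a \<Rightarrow> bool" where
  "del_vertex_edges E v = (\<lambda>x y. E x y \<and> x \<noteq> v \<and> y \<noteq> v)"

definition dominating_set :: "'a set \<Rightarrow> ('a \<Rightarrow> 'a \<Rightarrow> bool) \<Rightarrow> 'a set \<Rightarrow> bool" where
  "dominating_set V E D \<longleftrightarrow> D \<subseteq> V \<and> (\<forall>x\<in>V - D. \<exists>y\<in>D. E x y)"

definition domination_number :: "'a set \<Rightarrow> ('a \<Rightarrow> 'a \<Rightarrow> bool) \<Rightarrow> nat" where
  "domination_number V E = Min (card ` {D. dominating_set V E D})"

definition gamma_set :: "'a set \<Rightarrow> ('a \<Rightarrow> 'a \<Rightarrow> bool) \<Rightarrow> 'a set \<Rightarrow> bool" where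
  "gamma_set V E D \<longleftrightarrow> dominating_set V E D \<and> card D = domination_number V E"

definition certified_dominating_set :: "'a set \<Rightarrow> ('a \<Rightarrow> 'a \<Rightarrow> bool) \<Rightarrow> 'a set \<Rightarrow> bool" where
  "certified_dominating_set V E D \<longleftrightarrow> dominating_set V E D \<and>
     (\<forall>v\<in>D. card {u \<in> V - D. E v u} = 0 \<or> card {u \<in> V - D. E v u} \<ge> 2)"

definition certified_domination_number :: "'a set \<Rightarrow> ('a \<Rightarrow> 'a \<Rightarrow> bool) \<Rightarrow> nat" where
  "certified_domination_number V E = Min (card ` {D. certified_dominating_set V E D})"

end

theory Submission
  imports Defs
begin

lemma dom_fin: "finite V \<Longrightarrow> finite {D. dominating_set V E D}"
  by (rule finite_subset[of _ "Pow V"]) (auto simp: dominating_set_def)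

lemma dom_num_le: "finite V \<Longrightarrow> dominating_set V E D \<Longrightarrow> domination_number V E \<le> card D"
  unfolding domination_number_def by (rule Min_le) (auto simp: dom_fin)

lemma dom_V: "dominating_set V E V"
  by (auto simp: dominating_set_def)

lemma dom_num_ex: "finite V \<Longrightarrow> \<exists>D. gamma_set V E D"
proof -
  assume f: "finite V"
  have "domination_number V E \<in> card ` {D. dominating_set V E D}"
    unfolding domination_number_def by (rule Min_in) (simp add: f dom_fin, use dom_V[of V E] in blast)
  then show ?thesis by (auto simp: gamma_set_def)
qed

lemma cert_fin: "finite V \<Longrightarrow> finite {D. certified_dominating_set V E D}"
  by (rule finite_subset[of _ "Pow V"]) (auto simp: certified_dominating_set_def dominating_set_def)

lemma cert_V: "certified_dominating_set V E V"
  by (auto simp: certified_dominating_set_def dominating_set_def)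

lemma cert_num_le: "finite V \<Longrightarrow> certified_dominating_set V E D \<Longrightarrow> certified_domination_number V E \<le> card D"
  unfolding certified_domination_number_def by (rule Min_le) (auto simp: cert_fin)

lemma cert_num_ex: "finite V \<Longrightarrow> \<exists>D. certified_dominating_set V E D \<and> card D = certified_domination_number V E"
proof -
  assume f: "finite V"
  have "certified_domination_number V E \<in> card ` {D. certified_dominating_set V E D}"
    unfolding certified_domination_number_def by (rule Min_in) (simp add: f cert_fin, use cert_V[of V E] in blast)
  then show ?thesis by auto
qed

lemma reach_closed:
  assumes "reachable V E a z" and "a \<in> C" and "\<forall>x\<in>C. \<forall>y. E x y \<longrightarrow> y \<in> C"
  shows "z \<in> C"
  using assms by induction auto

theorem theorem2p6:
  fixes V :: "'a set" and E :: "'a \<Rightarrow> 'a \<Rightarrow> bool"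
  assumes "simple_graph V E"
    and "connected_graph V E"
    and "card V \<ge> 3"
    and "\<forall>v\<in>V. (\<exists>D. gamma_set V E D \<and> v \<in> D) \<longrightarrow>
           domination_number (V - {v}) (del_vertex_edges E v) \<ge> domination_number V E"
  shows "domination_number V E = certified_domination_number V E"
proof -
  note sg = assms(1)[unfolded simple_graph_def]
  have fV: "finite V" using sg by auto
  have Ein: "\<And>x y. E x y \<Longrightarrow> x \<in> V \<and> y \<in> V" and Esym: "\<And>x y. E x y \<Longrightarrow> E y x"
    and Eirr: "\<And>x. \<not> E x x" using sg by auto
  define g where "g = domination_number V E"
  define P where "P D = {(x,y). x \<in> D \<and> y \<in> V - D \<and> E x y}" for D
  have finP: "finite (P D)" for D
    by (rule finite_subset[of _ "V \<times> V"]) (use fV Ein in \<open>auto simp: P_def\<close>)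
  define S where "S = {D. gamma_set V E D}"
  have finS: "finite S" unfolding S_def
    by (rule finite_subset[of _ "Pow V"]) (use fV in \<open>auto simp: gamma_set_def dominating_set_def\<close>)
  have "S \<noteq> {}" using dom_num_ex[OF fV] by (auto simp: S_def)
  then have "finite ((\<lambda>D. card (P D)) ` S)" "(\<lambda>D. card (P D)) ` S \<noteq> {}" using finS by auto
  then have "Max ((\<lambda>D. card (P D)) ` S) \<in> (\<lambda>D. card (P D)) ` S" by (rule Max_in)
  then obtain D where DS: "D \<in> S" and DM: "card (P D) = Max ((\<lambda>D. card (P D)) ` S)" by auto
  have Dmax: "card (P D') \<le> card (P D)" if "D' \<in> S" for D'
    unfolding DM by (rule Max_ge) (use \<open>finite ((\<lambda>D. card (P D)) ` S)\<close> that in auto)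
  have Dd: "dominating_set V E D" and cD: "card D = g" using DS by (auto simp: S_def gamma_set_def g_def)
  have DV: "D \<subseteq> V" using Dd by (auto simp: dominating_set_def)
  have fD: "finite D" using DV fV finite_subset by auto
  have Ddom: "\<And>x. x \<in> V \<Longrightarrow> x \<notin> D \<Longrightarrow> \<exists>y\<in>D. E x y" using Dd by (auto simp: dominating_set_def)
  have cert: "certified_dominating_set V E D"
    unfolding certified_dominating_set_def
  proof (intro conjI Dd ballI)
    fix v assume vD: "v \<in> D"
    let ?N = "{u \<in> V - D. E v u}"
    show "card ?N = 0 \<or> card ?N \<ge> 2"
    proof (rule ccontr)
      assume "\<not> (card ?N = 0 \<or> card ?N \<ge> 2)"
      then have "card ?N = 1" by auto
      then obtain u where Nu: "?N = {u}" by (auto simp: card_Suc_eq)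
      have uV: "u \<in> V" and uD: "u \<notin> D" and Evu: "E v u" using Nu by auto
      have Nonly: "\<And>z. z \<in> V \<Longrightarrow> z \<notin> D \<Longrightarrow> E v z \<Longrightarrow> z = u" using Nu by auto
      have vV: "v \<in> V" using vD DV by auto
      have gpos: "g \<ge> 1" using cD vD fD by (metis One_nat_def Suc_leI card_gt_0_iff empty_iff)
      have priv: "\<And>x. x \<in> D - {v} \<Longrightarrow> \<not> E u x"
      proof
        fix x assume xD: "x \<in> D - {v}" and Eux: "E u x"
        have dom1: "\<And>z. z \<in> V - D \<Longrightarrow> \<exists>y\<in>D - {v}. E z y"
        proof -
          fix z assume z: "z \<in> V - D"
          then obtain y where "y \<in> D" "E z y" using Ddom by auto
          then show "\<exists>y\<in>D - {v}. E z y"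
          proof (cases "y = v")
            case True
            then have "z = u" using Nonly z \<open>E z y\<close> Esym by auto
            then show ?thesis using xD Eux by auto
          qed auto
        qed
        show False
        proof (cases "\<exists>w\<in>D. E v w")
          case True
          then obtain w where "w \<in> D" "E v w" by auto
          have "dominating_set V E (D - {v})"
            unfolding dominating_set_def
          proof (intro conjI ballI)
            show "D - {v} \<subseteq> V" using DV by auto
            fix z assume z: "z \<in> V - (D - {v})"
            show "\<exists>y\<in>D - {v}. E z y"
            proof (cases "z = v")
              case True then show ?thesis using \<open>w \<in> D\<close> \<open>E v w\<close> Eirr by (metis DiffI singletonD)
            next
              case False then show ?thesis using dom1 z by auto
            qed
          qed
          then have "g \<le> card (D - {v})" using dom_num_le fV g_def by metis
          then show False using cD vD fD gpos by simp
        next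
          case False
          have "dominating_set (V - {v}) (del_vertex_edges E v) (D - {v})"
            unfolding dominating_set_def del_vertex_edges_def
          proof (intro conjI ballI)
            show "D - {v} \<subseteq> V - {v}" using DV by auto
            fix z assume z: "z \<in> V - {v} - (D - {v})"
            then obtain y where "y \<in> D - {v}" "E z y" using dom1 by auto
            then show "\<exists>y\<in>D - {v}. E z y \<and> z \<noteq> v \<and> y \<noteq> v" using z by auto
          qed
          then have "domination_number (V - {v}) (del_vertex_edges E v) \<le> card (D - {v})"
            using dom_num_le fV by (metis finite_Diff)
          moreover have "domination_number (V - {v}) (del_vertex_edges E v) \<ge> g"
            using assms(4) vV vD DS by (auto simp: S_def g_def)
          ultimately show False using cD vD fD gpos by simp
        qed
      qed
      define D' where "D' = insert u (D - {v})"
      have uv: "u \<noteq> v" using uD vD by auto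
      have D'd: "dominating_set V E D'"
        unfolding dominating_set_def
      proof (intro conjI ballI)
        show "D' \<subseteq> V" using DV uV by (auto simp: D'_def)
        fix z assume z: "z \<in> V - D'"
        show "\<exists>y\<in>D'. E z y"
        proof (cases "z = v")
          case True then show ?thesis using Evu by (auto simp: D'_def)
        next
          case False
          then have "z \<in> V - D" "z \<noteq> u" using z by (auto simp: D'_def)
          then obtain y where "y \<in> D" "E z y" using Ddom by auto
          moreover have "y \<noteq> v" using Nonly \<open>z \<in> V - D\<close> \<open>z \<noteq> u\<close> \<open>E z y\<close> Esym by blast
          ultimately show ?thesis by (auto simp: D'_def)
        qed
      qed
      have "card D' = card D" using fD uD vD by (simp add: D'_def) (metis Suc_pred card_gt_0_iff empty_iff)
      then have D'S: "D' \<in> S" using D'd cD by (auto simp: S_def gamma_set_def g_def)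
      define R where "R = P D - {(v,u)}"
      have PD: "P D = insert (v,u) R" using vD uV uD Evu by (auto simp: R_def P_def)
      have vuR: "(v,u) \<notin> R" by (auto simp: R_def)
      have RP: "R \<subseteq> P D'"
      proof
        fix p assume "p \<in> R"
        then obtain x z where p: "p = (x,z)" "x \<in> D" "z \<in> V - D" "E x z" "(x,z) \<noteq> (v,u)"
          by (auto simp: R_def P_def)
        have "x \<noteq> v" using p Nonly by blast
        moreover have "z \<noteq> u" using p priv \<open>x \<noteq> v\<close> Esym by blast
        ultimately show "p \<in> P D'" using p uv by (auto simp: P_def D'_def)
      qed
      have uvP: "(u,v) \<in> P D'" using uV vV Esym Evu uv by (auto simp: P_def D'_def)
      have uvR: "(u,v) \<notin> R" using uD by (auto simp: R_def P_def)
      obtain t where tP: "t \<in> P D'" and tR: "t \<notin> R" and tuv: "t \<noteq> (u,v)"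
      proof (cases "\<exists>w\<in>D. E v w")
        case True
        then obtain w where w: "w \<in> D" "E v w" by auto
        have "w \<noteq> v" using w Eirr by auto
        have "(w,v) \<in> P D'" using w \<open>w \<noteq> v\<close> vV uv Esym by (auto simp: P_def D'_def)
        moreover have "(w,v) \<notin> R" using vD by (auto simp: R_def P_def)
        moreover have "(w,v) \<noteq> (u,v)" using w uD by auto
        ultimately show ?thesis using that by blast
      next
        case False
        have "\<exists>y. E u y \<and> y \<noteq> v"
        proof (rule ccontr)
          assume nn: "\<not> (\<exists>y. E u y \<and> y \<noteq> v)"
          have cl: "\<forall>x\<in>{u,v}. \<forall>y. E x y \<longrightarrow> y \<in> {u,v}"
          proof (intro ballI allI impI)
            fix x y assume "x \<in> {u,v}" "E x y"
            then show "y \<in> {u,v}"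
            proof (cases "x = u")
              case True then show ?thesis using nn \<open>E x y\<close> by auto
            next
              case False
              then have "x = v" using \<open>x \<in> {u,v}\<close> by auto
              show ?thesis
              proof (cases "y \<in> D")
                case True then show ?thesis using \<open>\<not> (\<exists>w\<in>D. E v w)\<close> \<open>x = v\<close> \<open>E x y\<close> by auto
              next
                case False then show ?thesis using Nonly \<open>x = v\<close> \<open>E x y\<close> Ein by auto
              qed
            qed
          qed
          have "\<forall>z\<in>V. z \<in> {u,v}"
          proof
            fix z assume "z \<in> V"
            then have "reachable V E v z" using assms(2) vV by (auto simp: connected_graph_def)
            then show "z \<in> {u,v}" by (rule reach_closed[OF _ _ cl]) simp
          qed
          then have "V \<subseteq> {u,v}" by auto
          then have "card V \<le> card {u,v}" by (simp add: card_mono)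
          also have "\<dots> \<le> 2" by (simp add: card_insert_if)
          finally show False using assms(3) by simp
        qed
        then obtain y where y: "E u y" "y \<noteq> v" by auto
        have yV: "y \<in> V" using y Ein by auto
        have yD: "y \<notin> D" using priv y by blast
        have "y \<noteq> u" using y Eirr by auto
        have "(u,y) \<in> P D'" using y yV yD \<open>y \<noteq> u\<close> by (auto simp: P_def D'_def)
        moreover have "(u,y) \<notin> R" using uD by (auto simp: R_def P_def)
        moreover have "(u,y) \<noteq> (u,v)" using y by auto
        ultimately show ?thesis using that by blast
      qed
      have "insert t (insert (u,v) R) \<subseteq> P D'" using RP uvP tP by auto
      then have "card (insert t (insert (u,v) R)) \<le> card (P D')" by (rule card_mono[OF finP])
      moreover have "finite R" using finP[of D] by (auto simp: R_def)
      ultimately have "card R + 2 \<le> card (P D')" using tR tuv uvR by simp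
      moreover have "card (P D) = card R + 1" using PD vuR \<open>finite R\<close> by simp
      ultimately show False using Dmax[OF D'S] by simp
    qed
  qed
  have "certified_domination_number V E \<le> g" using cert_num_le[OF fV cert] cD by simp
  moreover obtain C where "certified_dominating_set V E C" "card C = certified_domination_number V E"
    using cert_num_ex[OF fV] by auto
  then have "g \<le> certified_domination_number V E"
    using dom_num_le[OF fV, of E C] by (auto simp: certified_dominating_set_def g_def)
  ultimately show ?thesis by (simp add: g_def)
qed

end
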